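(* Let $P$ and $Q$ be distributions on $\mathcal{X}\times\{0,1\}$, and let $(X_1,Y_1),\dots,(X_m,Y_m)\stackrel{iid}{\sim}P$ and $X_{m+1},\dots,X_{m+n}\stackrel{iid}{\sim}Q_X$ be independent samples. Assume (A), (B), (C) below hold, and that $\widehat\eta_P$ (computed from $(X_1,Y_1),\dots,(X_m,Y_m)$) is a $(\delta_m,\tau_m)$-accurate estimator of $\eta_P$. Let $\widehat t_{P,Q,\alpha}$ be the $\lfloor n(1-\alpha)\rfloor$-th smallest value among $\widehat\eta_P(X_{m+1}),\dots,\widehat\eta_P(X_{m+n})$ and $\widehat G_{P,Q,\alpha}=\{x:\widehat\eta_P(x)\ge\widehat t_{P,Q,\alpha}\}$. Then for each $r>0$ there exists a positive constant $c$ such that, for $m$ and $n$ large enough, with probability at least $1-\tau_m-n^{-r}$ with respect to the draw of the two samples, $$Q_X(\widehat G_{P,Q,\alpha}\,\Delta\,G_{P,Q,\alpha})\le c\Big\{\delta_m^\kappa+\Big(\frac{\log n}{n}\Big)^{1/2}\Big\}.$$ Assumptions: (A) there exists $t_{P,Q,\alpha}\in(0,1]$ with $Q_X(\{x:\eta_P(x)\ge t_{P,Q,\alpha}\})=\alpha$; (B) there are positive constants $\delta_0,b_1,b_2,\kappa$ such that for all $\delta\in[-\delta_0,\delta_0]$, $b_1|\delta|^\kappa\le|F_{P,Q}(t_{P,Q,\alpha}+\delta)-F_{P,Q}(t_{P,Q,\alpha})|\le b_2|\delta|^\kappa$; (C) the support of $Q_X$ is contained in the support of $P_X$.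
   Context: $\mathcal{X}$ is a compact subset of $\mathbb{R}^d$. For a distribution $P$ of $(X,Y)\in\mathcal{X}\times\{0,1\}$, $P_X$ is the marginal of $X$ and $\eta_P(x)=P(Y=1\mid X=x)$; similarly $Q_X$, $\eta_Q$ for $Q$. All class-conditional distributions have densities w.r.t. a common dominating measure. $\alpha\in(0,1)$ is fixed. $F_{P,Q}(t)=Q_X(\{x:\eta_P(x)\le t\})$. Under (A) and (B), $t_{P,Q,\alpha}$ is unique and $G_{P,Q,\alpha}=\{x:\eta_P(x)\ge t_{P,Q,\alpha}\}$. For sequences of positive reals $\delta_m,\tau_m\to0$, an estimator $\widehat\eta_P$ of $\eta_P$ based on $m$ iid samples from $P$ is $(\delta_m,\tau_m)$-accurate if $P^m(\|\widehat\eta_P-\eta_P\|_\infty\ge\delta_m)\le\tau_m$ for all sufficiently large $m$, where $P^m$ is the product measure. $G\Delta G'$ denotes symmetric difference. *)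

theory Defs
  imports "HOL-Probability.Probability"
begin

definition marginal :: "('a::topological_space \<times> bool) measure \<Rightarrow> 'a measure" where
  "marginal M = distr M borel fst"

text \<open>eta is (a version of) the regression function x \<mapsto> M(Y = 1 | X = x).\<close>
definition is_regression_fn :: "('a::topological_space \<times> bool) measure \<Rightarrow> ('a \<Rightarrow> real) \<Rightarrow> bool" where
  "is_regression_fn M eta \<longleftrightarrow>
     eta \<in> borel_measurable borel \<and> (\<forall>x. 0 \<le> eta x \<and> eta x \<le> 1) \<and>
     (\<forall>A \<in> sets borel. measure M (A \<times> {True}) = (LINT x:A|marginal M. eta x))"

definition F_PQ :: "'a measure \<Rightarrow> ('a \<Rightarrow> real) \<Rightarrow> real \<Rightarrow> real" where
  "F_PQ QX eta t = measure QX {x. eta x \<le> t}"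

definition msupport :: "'a::metric_space measure \<Rightarrow> 'a set" where
  "msupport M = {x. \<forall>e>0. emeasure M (ball x e) > 0}"

definition sup_dist :: "'a set \<Rightarrow> ('a \<Rightarrow> real) \<Rightarrow> ('a \<Rightarrow> real) \<Rightarrow> ereal" where
  "sup_dist A f g = (SUP x\<in>A. ereal \<bar>f x - g x\<bar>)"

text \<open>(delta_m, tau_m)-accuracy; probability of the bad event in the outer-measure sense
  (coincides with P^m of the event whenever it is measurable).\<close>
definition accurate ::
  "('a \<times> bool) measure \<Rightarrow> 'a set \<Rightarrow> (nat \<Rightarrow> (nat \<Rightarrow> 'a \<times> bool) \<Rightarrow> 'a \<Rightarrow> real)
    \<Rightarrow> ('a \<Rightarrow> real) \<Rightarrow> (nat \<Rightarrow> real) \<Rightarrow> (nat \<Rightarrow> real) \<Rightarrow> bool" where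
  "accurate P X etahat eta \<delta> \<tau> \<longleftrightarrow>
     (\<exists>M. \<forall>m\<ge>M. \<exists>E \<in> sets (PiM {..<m} (\<lambda>_. P)).
        {S \<in> space (PiM {..<m} (\<lambda>_. P)). sup_dist X (etahat m S) eta \<ge> ereal (\<delta> m)} \<subseteq> E
        \<and> measure (PiM {..<m} (\<lambda>_. P)) E \<le> \<tau> m)"

text \<open>k-th smallest element (1-indexed, counted with multiplicity) of a list.\<close>
definition kth_smallest :: "nat \<Rightarrow> real list \<Rightarrow> real" where
  "kth_smallest k xs = sort xs ! (k - 1)"

definition symdiff :: "'a set \<Rightarrow> 'a set \<Rightarrow> 'a set" where
  "symdiff A B = (A - B) \<union> (B - A)"

end

theory Submission
  imports Defs "HOL-Real_Asymp.Real_Asymp"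
begin


lemma kth_le:
  fixes xs :: "real list"
  assumes "1 \<le> k" "k \<le> length (filter (\<lambda>y. y \<le> v) xs)"
  shows "kth_smallest k xs \<le> v"
proof (rule ccontr)
  assume "\<not> ?thesis"
  hence gt: "sort xs ! (k-1) > v" by (simp add: kth_smallest_def)
  have "length (filter (\<lambda>y. y \<le> v) xs) = length (filter (\<lambda>y. y \<le> v) (sort xs))"
    by (metis mset_filter mset_sort size_mset)
  also have "\<dots> = card {i. i < length (sort xs) \<and> sort xs ! i \<le> v}" by (rule length_filter_conv_card)
  also have "\<dots> \<le> card {..<k-1}"
  proof (rule card_mono)
    show "finite {..<k-1}" by simp
    show "{i. i < length (sort xs) \<and> sort xs ! i \<le> v} \<subseteq> {..<k-1}"
    proof
      fix i assume i: "i \<in> {i. i < length (sort xs) \<and> sort xs ! i \<le> v}"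
      show "i \<in> {..<k-1}"
      proof (rule ccontr)
        assume "i \<notin> {..<k-1}" hence "k-1 \<le> i" by simp
        hence "sort xs ! (k-1) \<le> sort xs ! i" using i by (intro sorted_nth_mono) auto
        thus False using i gt by auto
      qed
    qed
  qed
  finally show False using assms by simp
qed

lemma kth_ge:
  fixes xs :: "real list"
  assumes "1 \<le> k" "k \<le> length xs" "length (filter (\<lambda>y. y < v) xs) < k"
  shows "v \<le> kth_smallest k xs"
proof (rule ccontr)
  assume "\<not> ?thesis"
  hence lt: "sort xs ! (k-1) < v" by (simp add: kth_smallest_def)
  have "k = card {..<k}" by simp
  also have "\<dots> \<le> card {i. i < length (sort xs) \<and> sort xs ! i < v}"
  proof (rule card_mono)
    show "finite {i. i < length (sort xs) \<and> sort xs ! i < v}" by simp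
    show "{..<k} \<subseteq> {i. i < length (sort xs) \<and> sort xs ! i < v}"
    proof
      fix i assume i: "i \<in> {..<k}"
      hence "sort xs ! i \<le> sort xs ! (k-1)" using assms by (intro sorted_nth_mono) auto
      thus "i \<in> {i. i < length (sort xs) \<and> sort xs ! i < v}" using i lt assms by auto
    qed
  qed
  also have "\<dots> = length (filter (\<lambda>y. y < v) (sort xs))" by (rule length_filter_conv_card[symmetric])
  also have "\<dots> = length (filter (\<lambda>y. y < v) xs)"
    by (metis mset_filter mset_sort size_mset)
  finally show False using assms by simp
qed

lemma len_filter_map_upt: "length (filter P (map f [0..<n])) = card {i. i < n \<and> P (f i)}"
  unfolding length_filter_conv_card by (intro arg_cong[where f=card] Collect_cong) auto

lemma indep_coords:
  assumes N: "prob_space N" and I: "I \<noteq> {}"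
  shows "prob_space.indep_vars (PiM I (\<lambda>_. N)) (\<lambda>_. N) (\<lambda>i \<omega>. \<omega> i) I"
proof -
  have PS: "prob_space (PiM I (\<lambda>_. N))" by (rule prob_space_PiM) (use N in auto)
  show ?thesis
  proof (subst prob_space.indep_vars_iff_distr_eq_PiM'[OF PS I])
    show "\<And>i. i \<in> I \<Longrightarrow> (\<lambda>\<omega>. \<omega> i) \<in> measurable (PiM I (\<lambda>_. N)) N" by measurable
    have "distr (PiM I (\<lambda>_. N)) (PiM I (\<lambda>_. N)) (\<lambda>x. \<lambda>i\<in>I. x i) = distr (PiM I (\<lambda>_. N)) (PiM I (\<lambda>_. N)) (\<lambda>x. x)"
      by (rule distr_cong) (auto simp: space_PiM PiE_def extensional_restrict)
    also have "\<dots> = PiM I (\<lambda>_. N)" by (rule distr_id)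
    also have "\<dots> = PiM I (\<lambda>i. distr (PiM I (\<lambda>_. N)) N (\<lambda>\<omega>. \<omega> i))"
      by (rule PiM_cong) (use distr_PiM_component[of I "\<lambda>_. N"] N in auto)
    finally show "distr (PiM I (\<lambda>_. N)) (PiM I (\<lambda>_. N)) (\<lambda>x. \<lambda>i\<in>I. x i) = PiM I (\<lambda>i. distr (PiM I (\<lambda>_. N)) N (\<lambda>\<omega>. \<omega> i))" .
  qed
qed

lemma coord_hoeffding:
  fixes n :: nat
  assumes N: "prob_space N" and A: "A \<in> sets N" and n: "n > 0" and e: "\<epsilon> \<ge> 0"
  shows "measure (PiM {..<n} (\<lambda>_. N)) {Z \<in> space (PiM {..<n} (\<lambda>_. N)). (\<Sum>i<n. indicator A (Z i)) \<le> real n * measure N A - \<epsilon>} \<le> exp (-2 * \<epsilon>\<^sup>2 / real n)"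
    and "measure (PiM {..<n} (\<lambda>_. N)) {Z \<in> space (PiM {..<n} (\<lambda>_. N)). (\<Sum>i<n. indicator A (Z i)) \<ge> real n * measure N A + \<epsilon>} \<le> exp (-2 * \<epsilon>\<^sup>2 / real n)"
proof -
  let ?M = "PiM {..<n} (\<lambda>_. N)"
  have PS: "prob_space ?M" by (rule prob_space_PiM) (use N in auto)
  have I: "{..<n} \<noteq> {}" using n by auto
  have ind: "prob_space.indep_vars ?M (\<lambda>_. borel) (\<lambda>i Z. indicator A (Z i) :: real) {..<n}"
    by (rule prob_space.indep_vars_compose2[OF PS indep_coords[OF N I]]) (use A in auto)
  have ex: "prob_space.expectation ?M (\<lambda>Z. indicator A (Z i) :: real) = measure N A" if i: "i < n" for i
  proof -
    have "prob_space.expectation ?M (\<lambda>Z. indicator A (Z i) :: real) = integral\<^sup>L (distr ?M N (\<lambda>Z. Z i)) (indicator A)"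
      by (rule integral_distr[symmetric]) (use i A in auto)
    also have "distr ?M N (\<lambda>Z. Z i) = N" using distr_PiM_component[of "{..<n}" "\<lambda>_. N" i] N i by simp
    also have "integral\<^sup>L N (indicator A) = measure N A"
      using A N by (simp add: prob_space.emeasure_space_1 finite_measure.emeasure_finite prob_space.finite_measure)
    finally show ?thesis .
  qed
  have ivb: "indep_interval_bounded_random_variables ?M {..<n} (\<lambda>i Z. indicator A (Z i)) (\<lambda>_. 0) (\<lambda>_. 1)"
    unfolding indep_interval_bounded_random_variables_def indep_interval_bounded_random_variables_axioms_def
  proof (intro conjI allI impI PS ind)
    show "finite {..<n}" by simp
    fix i show "AE x in ?M. indicator A (x i) \<in> {0..1::real}" by (intro AE_I2) (auto simp: indicator_def)
  qed
  interpret H: Hoeffding_ineq ?M "{..<n}" "\<lambda>i Z. indicator A (Z i)" "\<lambda>_. 0" "\<lambda>_. 1" "real n * measure N A"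
  proof -
    show "Hoeffding_ineq ?M {..<n} (\<lambda>i Z. indicator A (Z i)) (\<lambda>_. 0) (\<lambda>_. 1)"
      unfolding Hoeffding_ineq_def by (rule ivb)
    show "real n * measure N A \<equiv> (\<Sum>i<n. prob_space.expectation ?M (\<lambda>Z. indicator A (Z i)))"
      using ex by simp
  qed
  show "measure ?M {Z \<in> space ?M. (\<Sum>i<n. indicator A (Z i)) \<le> real n * measure N A - \<epsilon>} \<le> exp (-2 * \<epsilon>\<^sup>2 / real n)"
    using H.Hoeffding_ineq_le[OF e] n by simp
  show "measure ?M {Z \<in> space ?M. (\<Sum>i<n. indicator A (Z i)) \<ge> real n * measure N A + \<epsilon>} \<le> exp (-2 * \<epsilon>\<^sup>2 / real n)"
    using H.Hoeffding_ineq_ge[OF e] n by simp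
qed

lemma sum_indicator_card:
  fixes n :: nat
  shows "(\<Sum>i<n. indicator A (Z i) :: real) = real (card {i. i < n \<and> Z i \<in> A})"
proof -
  have "(\<Sum>i<n. indicator A (Z i) :: real) = (\<Sum>i<n. if i \<in> Z -` A then 1 else 0)"
    by (intro sum.cong) (auto simp: indicator_def)
  also have "\<dots> = (\<Sum>i\<in>{..<n} \<inter> Z -` A. 1)" by (rule sum.inter_restrict[symmetric]) simp
  also have "\<dots> = real (card ({..<n} \<inter> Z -` A))" by simp
  also have "{..<n} \<inter> Z -` A = {i. i<n \<and> Z i \<in> A}" by auto
  finally show ?thesis .
qed


theorem theorem2:
  fixes \<X> :: "'a::euclidean_space set"
    and P Q :: "('a \<times> bool) measure"
    and \<alpha> :: real
    and eta :: "'a \<Rightarrow> real"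
    and etahat :: "nat \<Rightarrow> (nat \<Rightarrow> 'a \<times> bool) \<Rightarrow> 'a \<Rightarrow> real"
    and \<delta> \<tau> :: "nat \<Rightarrow> real"
    and t \<delta>0 b1 b2 \<kappa> :: real
  assumes X_compact: "compact \<X>"
    and alpha: "0 < \<alpha>" "\<alpha> < 1"
    and P_prob: "prob_space P" "sets P = sets (borel \<Otimes>\<^sub>M count_space UNIV)" "emeasure P (\<X> \<times> UNIV) = 1"
    and Q_prob: "prob_space Q" "sets Q = sets (borel \<Otimes>\<^sub>M count_space UNIV)" "emeasure Q (\<X> \<times> UNIV) = 1"
    and eta_P: "is_regression_fn P eta"
    and delta_seq: "\<forall>m. 0 < \<delta> m" "\<delta> \<longlonglongrightarrow> 0"
    and tau_seq: "\<forall>m. 0 < \<tau> m" "\<tau> \<longlonglongrightarrow> 0"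
    and etahat_meas: "\<forall>m S. etahat m S \<in> borel_measurable borel"
    and accurate: "accurate P \<X> etahat eta \<delta> \<tau>"
    and A: "0 < t" "t \<le> 1" "measure (marginal Q) {x. eta x \<ge> t} = \<alpha>"
    and B: "0 < \<delta>0" "0 < b1" "0 < b2" "0 < \<kappa>"
       "\<forall>d \<in> {-\<delta>0..\<delta>0}.
          b1 * \<bar>d\<bar> powr \<kappa> \<le> \<bar>F_PQ (marginal Q) eta (t + d) - F_PQ (marginal Q) eta t\<bar> \<and>
          \<bar>F_PQ (marginal Q) eta (t + d) - F_PQ (marginal Q) eta t\<bar> \<le> b2 * \<bar>d\<bar> powr \<kappa>"
    and C: "msupport (marginal Q) \<subseteq> msupport (marginal P)"
  shows "\<forall>r>0. \<exists>c>0. \<exists>M N. \<forall>m\<ge>M. \<forall>n\<ge>N.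
     \<exists>E \<in> sets (PiM {..<m} (\<lambda>_. P) \<Otimes>\<^sub>M PiM {..<n} (\<lambda>_. marginal Q)).
       E \<subseteq> {(S, Z) \<in> space (PiM {..<m} (\<lambda>_. P) \<Otimes>\<^sub>M PiM {..<n} (\<lambda>_. marginal Q)).
               measure (marginal Q)
                 (symdiff
                   {x. etahat m S x \<ge> kth_smallest (nat \<lfloor>real n * (1 - \<alpha>)\<rfloor>)
                                          (map (\<lambda>i. etahat m S (Z i)) [0..<n])}
                   {x. eta x \<ge> t})
               \<le> c * (\<delta> m powr \<kappa> + sqrt (ln (real n) / real n))}
       \<and> measure (PiM {..<m} (\<lambda>_. P) \<Otimes>\<^sub>M PiM {..<n} (\<lambda>_. marginal Q)) E
           \<ge> 1 - \<tau> m - real n powr (- r)"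
  proof -
  define QX where "QX = marginal Q"
  have spQ: "space Q = UNIV"
    using sets_eq_imp_space_eq[OF Q_prob(2)] by (simp add: space_pair_measure)
  have fstm: "fst \<in> measurable Q borel"
    by (subst measurable_cong_sets[OF Q_prob(2) refl]) (rule measurable_fst)
  have QXps: "prob_space QX"
    unfolding QX_def marginal_def by (rule prob_space.prob_space_distr[OF Q_prob(1) fstm])
  interpret QXp: prob_space QX by (rule QXps)
  have setsQX: "sets QX = sets borel" unfolding QX_def marginal_def by simp
  have spQX: "space QX = UNIV" unfolding QX_def marginal_def by simp
  have eta_meas: "eta \<in> borel_measurable borel" using eta_P unfolding is_regression_fn_def by blast
  have eta_measQ[measurable]: "eta \<in> borel_measurable QX"
    by (subst measurable_cong_sets[OF setsQX refl]) (rule eta_meas)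
  have Xclosed: "closed \<X>" using X_compact by (rule compact_imp_closed)
  have XsetsQ[measurable]: "\<X> \<in> sets QX" using setsQX Xclosed by simp
  have "emeasure QX \<X> = emeasure Q (fst -` \<X> \<inter> space Q)"
    unfolding QX_def marginal_def by (rule emeasure_distr[OF fstm]) (use Xclosed in simp)
  also have "fst -` \<X> \<inter> space Q = \<X> \<times> UNIV" using spQ by auto
  finally have "emeasure QX \<X> = 1" using Q_prob(3) by simp
  hence QX_X: "measure QX (UNIV - \<X>) = 0"
    using QXp.prob_compl[OF XsetsQ] spQX by (simp add: QXp.emeasure_eq_measure)
  have cX_sets[measurable]: "UNIV - \<X> \<in> sets QX" using XsetsQ spQX by (metis sets.compl_sets)
  define F where "F = (\<lambda>s. measure QX {x. eta x \<le> s})"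
  have Qset: "\<And>Pr. {x\<in>space QX. Pr x} \<in> sets QX \<Longrightarrow> {x. Pr x} \<in> sets QX" using spQX by simp
  have Fsets[measurable]: "\<And>s. {x. eta x \<le> s} \<in> sets QX" by (rule Qset) measurable
  have Fmono: "\<And>s s'. s \<le> s' \<Longrightarrow> F s \<le> F s'"
    unfolding F_def by (intro QXp.finite_measure_mono) auto
  have Fdiff: "\<And>s s'. s \<le> s' \<Longrightarrow> measure QX ({x. eta x \<le> s'} - {x. eta x \<le> s}) = F s' - F s"
    unfolding F_def by (intro QXp.finite_measure_Diff) auto
  have Bd: "\<And>d. d \<in> {-\<delta>0..\<delta>0} \<Longrightarrow> b1 * \<bar>d\<bar> powr \<kappa> \<le> \<bar>F (t+d) - F t\<bar> \<and> \<bar>F (t+d) - F t\<bar> \<le> b2 * \<bar>d\<bar> powr \<kappa>"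
    using B(5) unfolding F_PQ_def F_def QX_def by blast
  have Bup: "b1 * d powr \<kappa> \<le> F (t+d) - F t \<and> F (t+d) - F t \<le> b2 * d powr \<kappa>" if "0 \<le> d" "d \<le> \<delta>0" for d
  proof -
    have "F t \<le> F (t+d)" using that by (intro Fmono) simp
    with Bd[of d] that show ?thesis by auto
  qed
  have Bdn: "b1 * d powr \<kappa> \<le> F t - F (t-d) \<and> F t - F (t-d) \<le> b2 * d powr \<kappa>" if "0 \<le> d" "d \<le> \<delta>0" for d
  proof -
    have "F (t-d) \<le> F t" using that by (intro Fmono) simp
    with Bd[of "-d"] that show ?thesis by auto
  qed
  have lt_t: "measure QX {x. eta x < t} = 1 - \<alpha>"
  proof -
    have "{x. eta x < t} = space QX - {x. t \<le> eta x}" using spQX by auto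
    moreover have "{x. t \<le> eta x} \<in> sets QX" by (rule Qset) measurable
    ultimately show ?thesis using QXp.prob_compl A(3) unfolding QX_def by auto
  qed
  have atom: "measure QX {x. eta x = t} = 0"
  proof (rule ccontr)
    define a where "a = measure QX {x. eta x = t}"
    assume "measure QX {x. eta x = t} \<noteq> 0"
    hence apos: "a > 0" unfolding a_def using measure_nonneg[of QX] by (metis order_le_less)
    define d where "d = min \<delta>0 ((a/(2*b2)) powr (1/\<kappa>))"
    have dpos: "d > 0" using B apos by (simp add: d_def)
    have dle: "d \<le> \<delta>0" by (simp add: d_def)
    have "a \<le> measure QX ({x. eta x \<le> t} - {x. eta x \<le> t - d})"
      unfolding a_def using dpos by (intro QXp.finite_measure_mono) auto
    also have "\<dots> = F t - F (t-d)" using dpos by (intro Fdiff) simp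
    also have "\<dots> \<le> b2 * d powr \<kappa>" using Bdn[of d] dpos dle by simp
    also have "d powr \<kappa> \<le> ((a/(2*b2)) powr (1/\<kappa>)) powr \<kappa>"
      using dpos B by (intro powr_mono2) (auto simp: d_def)
    also have "\<dots> = a/(2*b2)" using B apos by (simp add: powr_powr)
    finally have "a \<le> b2 * (a / (2*b2))" using B by (simp add: mult_left_mono)
    thus False using apos B by (simp add: field_simps)
  qed
  have Ft: "F t = 1 - \<alpha>"
  proof -
    have eq: "{x. eta x \<le> t} = {x. eta x < t} \<union> {x. eta x = t}" by auto
    have s1[measurable]: "{x. eta x < t} \<in> sets QX" by (rule Qset) measurable
    have s2[measurable]: "{x. eta x = t} \<in> sets QX" by (rule Qset) measurable
    have "F t \<le> measure QX {x. eta x < t} + measure QX {x. eta x = t}"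
      unfolding F_def eq by (intro measure_Un_le) auto
    moreover have "measure QX {x. eta x < t} \<le> F t"
      unfolding F_def by (intro QXp.finite_measure_mono) auto
    ultimately show ?thesis using lt_t atom by simp
  qed
  show ?thesis unfolding QX_def[symmetric]
  proof (intro allI impI)
    fix r :: real assume r: "r > 0"
    define R where "R = r + 1"
    have Rpos: "R > 0" using r by (simp add: R_def)
    define s2 where "s2 = (\<lambda>n::nat. sqrt (R * ln (real n) / real n))"
    define w where "w = (\<lambda>n::nat. s2 n + 1 / real n)"
    define u where "u = (\<lambda>n::nat. (w n / b1) powr (1/\<kappa>))"
    define c where "c = 2 * b2 * 4 powr \<kappa> * (1 + (sqrt R + 1) / b1)"
    have cpos: "c > 0" using B Rpos by (simp add: c_def add_pos_nonneg)
    have wlim: "w \<longlonglongrightarrow> 0"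
    proof -
      have l1: "(\<lambda>n::nat. sqrt (ln (real n) / real n)) \<longlonglongrightarrow> 0" by real_asymp
      have l2: "(\<lambda>n::nat. 1 / real n) \<longlonglongrightarrow> 0" by real_asymp
      have "(\<lambda>n::nat. sqrt R * sqrt (ln (real n) / real n) + 1 / real n) \<longlonglongrightarrow> sqrt R * 0 + 0"
        by (intro tendsto_intros l1 l2)
      moreover have "w = (\<lambda>n::nat. sqrt R * sqrt (ln (real n) / real n) + 1 / real n)"
        unfolding w_def s2_def by (auto simp: real_sqrt_mult[symmetric])
      ultimately show ?thesis by simp
    qed
    have thr: "b1 * (\<delta>0/4) powr \<kappa> > 0" using B by simp
    obtain N0 where N0: "\<And>n. n \<ge> N0 \<Longrightarrow> w n < b1 * (\<delta>0/4) powr \<kappa>"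
      using order_tendstoD(2)[OF wlim thr] unfolding eventually_sequentially by blast
    have d4: "\<delta>0/4 > 0" using B by simp
    obtain M1 where M1: "\<And>m. m \<ge> M1 \<Longrightarrow> \<delta> m < \<delta>0/4"
      using order_tendstoD(2)[OF delta_seq(2) d4] unfolding eventually_sequentially by blast
    obtain M0 where M0: "\<And>m. m \<ge> M0 \<Longrightarrow> \<exists>E \<in> sets (PiM {..<m} (\<lambda>_. P)).
        {S \<in> space (PiM {..<m} (\<lambda>_. P)). sup_dist \<X> (etahat m S) eta \<ge> ereal (\<delta> m)} \<subseteq> E
        \<and> measure (PiM {..<m} (\<lambda>_. P)) E \<le> \<tau> m"
      using accurate unfolding accurate_def by blast
    define Nn where "Nn = max (max N0 3) (nat \<lceil>1/(1-\<alpha>)\<rceil>)"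
    show "\<exists>c>0. \<exists>M N. \<forall>m\<ge>M. \<forall>n\<ge>N. \<exists>E \<in> sets (PiM {..<m} (\<lambda>_. P) \<Otimes>\<^sub>M PiM {..<n} (\<lambda>_. QX)).
       E \<subseteq> {(S, Z) \<in> space (PiM {..<m} (\<lambda>_. P) \<Otimes>\<^sub>M PiM {..<n} (\<lambda>_. QX)).
               measure QX
                 (symdiff
                   {x. etahat m S x \<ge> kth_smallest (nat \<lfloor>real n * (1 - \<alpha>)\<rfloor>)
                                          (map (\<lambda>i. etahat m S (Z i)) [0..<n])}
                   {x. eta x \<ge> t})
               \<le> c * (\<delta> m powr \<kappa> + sqrt (ln (real n) / real n))}
       \<and> measure (PiM {..<m} (\<lambda>_. P) \<Otimes>\<^sub>M PiM {..<n} (\<lambda>_. QX)) E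
           \<ge> 1 - \<tau> m - real n powr (- r)"
    proof (rule exI[of _ c], rule conjI[OF cpos], rule exI[of _ "max M0 M1"], rule exI[of _ Nn], intro allI impI)
      fix m n :: nat assume m: "max M0 M1 \<le> m" and n: "Nn \<le> n"
      let ?PS = "PiM {..<m} (\<lambda>_. P)"
      let ?PZ = "PiM {..<n} (\<lambda>_. QX)"
      have nN0: "n \<ge> N0" and n3: "n \<ge> 3" using n by (auto simp: Nn_def)
      have npos: "real n > 0" using n3 by simp
      have nal: "real n * (1 - \<alpha>) \<ge> 1"
      proof -
        have "real (nat \<lceil>1/(1-\<alpha>)\<rceil>) \<le> real n" using n by (simp add: Nn_def)
        moreover have "1/(1-\<alpha>) \<le> real (nat \<lceil>1/(1-\<alpha>)\<rceil>)" by linarith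
        ultimately have "1/(1-\<alpha>) \<le> real n" by linarith
        thus ?thesis using alpha by (simp add: field_simps)
      qed
      obtain Eacc where Eacc: "Eacc \<in> sets ?PS"
          "{S \<in> space ?PS. sup_dist \<X> (etahat m S) eta \<ge> ereal (\<delta> m)} \<subseteq> Eacc"
          "measure ?PS Eacc \<le> \<tau> m"
        using M0[of m] m by auto
      define k where "k = nat \<lfloor>real n * (1 - \<alpha>)\<rfloor>"
      have kle: "real k \<le> real n * (1 - \<alpha>)" using nal by (simp add: k_def)
      have kgt: "real n * (1 - \<alpha>) - 1 < real k" using nal by (simp add: k_def)
      have k1: "1 \<le> k"
      proof -
        have "(1::int) \<le> \<lfloor>real n * (1 - \<alpha>)\<rfloor>" using nal by simp
        thus ?thesis unfolding k_def by linarith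
      qed
      have kn: "k \<le> n"
      proof -
        have "real k \<le> real n" using kle alpha npos by (smt (verit) mult_left_le)
        thus ?thesis by simp
      qed
      define ss where "ss = s2 n"
      define ww where "ww = w n"
      define uu where "uu = u n"
      define dd where "dd = \<delta> m"
      have ss0: "ss \<ge> 0" using Rpos n3 by (simp add: ss_def s2_def)
      have ww_eq: "ww = ss + 1 / real n" by (simp add: ww_def w_def ss_def)
      have nww: "real n * ww = real n * ss + 1" using npos by (simp add: ww_eq field_simps)
      have wwpos: "ww > 0"
      proof -
        have "1 / real n > 0" using npos by simp
        thus ?thesis using ss0 ww_eq by linarith
      qed
      have uupos: "uu > 0" using wwpos B by (simp add: uu_def u_def ww_def[symmetric])
      have uuk: "uu powr \<kappa> = ww / b1" using wwpos B by (simp add: uu_def u_def ww_def[symmetric] powr_powr)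
      have uule: "uu \<le> \<delta>0/4"
      proof -
        have "ww / b1 < (\<delta>0/4) powr \<kappa>" using N0[OF nN0] B by (simp add: ww_def field_simps)
        hence "(ww / b1) powr (1/\<kappa>) \<le> ((\<delta>0/4) powr \<kappa>) powr (1/\<kappa>)"
          using wwpos B by (intro powr_mono2) auto
        also have "\<dots> = \<delta>0/4" using B by (simp add: powr_powr)
        finally show ?thesis by (simp add: uu_def u_def ww_def)
      qed
      have ddpos: "dd > 0" using delta_seq(1) by (simp add: dd_def)
      have ddle: "dd < \<delta>0/4" using M1[of m] m by (simp add: dd_def)
      define A1 where "A1 = {x. eta x \<le> t + uu}"
      define A2 where "A2 = {x. eta x \<le> t - uu}"
      have A1s[measurable]: "A1 \<in> sets QX" and A2s[measurable]: "A2 \<in> sets QX"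
        unfolding A1_def A2_def by (rule Fsets)+
      have FA1: "measure QX A1 \<ge> 1 - \<alpha> + ww"
      proof -
        have "b1 * uu powr \<kappa> \<le> F (t+uu) - F t" using Bup[of uu] uupos uule B by simp
        thus ?thesis using uuk B Ft by (simp add: A1_def F_def)
      qed
      have FA2: "measure QX A2 \<le> 1 - \<alpha> - ww"
      proof -
        have "b1 * uu powr \<kappa> \<le> F t - F (t-uu)" using Bdn[of uu] uupos uule B by simp
        thus ?thesis using uuk B Ft by (simp add: A2_def F_def)
      qed
      define Zgood where "Zgood = {Z \<in> space ?PZ. (\<forall>i\<in>{..<n}. Z i \<in> \<X>) \<and> real k \<le> (\<Sum>i<n. indicator A1 (Z i)) \<and> (\<Sum>i<n. indicator A2 (Z i)) < real k}"
      define Sgood where "Sgood = space ?PS - Eacc"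
      have Zsets: "Zgood \<in> sets ?PZ" unfolding Zgood_def by measurable
      have Ssets: "Sgood \<in> sets ?PS" unfolding Sgood_def using Eacc(1) by auto
      show "\<exists>E \<in> sets (?PS \<Otimes>\<^sub>M ?PZ).
       E \<subseteq> {(S, Z) \<in> space (?PS \<Otimes>\<^sub>M ?PZ).
               measure QX
                 (symdiff
                   {x. etahat m S x \<ge> kth_smallest (nat \<lfloor>real n * (1 - \<alpha>)\<rfloor>)
                                          (map (\<lambda>i. etahat m S (Z i)) [0..<n])}
                   {x. eta x \<ge> t})
               \<le> c * (\<delta> m powr \<kappa> + sqrt (ln (real n) / real n))}
       \<and> measure (?PS \<Otimes>\<^sub>M ?PZ) E \<ge> 1 - \<tau> m - real n powr (- r)"
      proof (rule bexI[of _ "Sgood \<times> Zgood"], rule conjI)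
        show "Sgood \<times> Zgood \<in> sets (?PS \<Otimes>\<^sub>M ?PZ)" using Ssets Zsets by (rule pair_measureI)
        show "Sgood \<times> Zgood \<subseteq> {(S, Z) \<in> space (?PS \<Otimes>\<^sub>M ?PZ).
               measure QX
                 (symdiff
                   {x. etahat m S x \<ge> kth_smallest (nat \<lfloor>real n * (1 - \<alpha>)\<rfloor>)
                                          (map (\<lambda>i. etahat m S (Z i)) [0..<n])}
                   {x. eta x \<ge> t})
               \<le> c * (\<delta> m powr \<kappa> + sqrt (ln (real n) / real n))}"
        proof (rule subsetI)
          fix p assume p: "p \<in> Sgood \<times> Zgood"
          then obtain S Z where pSZ: "p = (S, Z)" and S: "S \<in> Sgood" and Z: "Z \<in> Zgood" by blast
          have Sspace: "S \<in> space ?PS" and SnE: "S \<notin> Eacc" using S by (auto simp: Sgood_def)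
          have Zspace: "Z \<in> space ?PZ" and Zin: "\<And>i. i < n \<Longrightarrow> Z i \<in> \<X>"
            and cnt1: "real k \<le> (\<Sum>i<n. indicator A1 (Z i))" and cnt2: "(\<Sum>i<n. indicator A2 (Z i)) < real k"
            using Z by (auto simp: Zgood_def)
          have close: "\<bar>etahat m S x - eta x\<bar> < dd" if x: "x \<in> \<X>" for x
          proof -
            have "\<not> (ereal (\<delta> m) \<le> sup_dist \<X> (etahat m S) eta)" using Eacc(2) Sspace SnE by auto
            hence lt: "sup_dist \<X> (etahat m S) eta < ereal dd" by (simp add: dd_def)
            have "ereal \<bar>etahat m S x - eta x\<bar> \<le> sup_dist \<X> (etahat m S) eta"
              unfolding sup_dist_def using x by (rule SUP_upper)
            from this lt have "ereal \<bar>etahat m S x - eta x\<bar> < ereal dd" by (rule order.strict_trans1)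
            thus ?thesis by simp
          qed
          define xs where "xs = map (\<lambda>i. etahat m S (Z i)) [0..<n]"
          define th where "th = kth_smallest k xs"
          have fin1: "finite {i. i < n \<and> P' i}" for P' by simp
          have th_up: "th \<le> t + uu + dd"
          proof -
            have "real k \<le> real (card {i. i < n \<and> Z i \<in> A1})" using cnt1 sum_indicator_card by metis
            hence "k \<le> card {i. i < n \<and> Z i \<in> A1}" by linarith
            also have "\<dots> \<le> card {i. i < n \<and> etahat m S (Z i) \<le> t + uu + dd}"
            proof (rule card_mono[OF fin1], rule subsetI)
              fix i assume "i \<in> {i. i < n \<and> Z i \<in> A1}"
              hence i: "i < n" "eta (Z i) \<le> t + uu" by (auto simp: A1_def)
              have "\<bar>etahat m S (Z i) - eta (Z i)\<bar> < dd" using close Zin i(1) by blast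
              thus "i \<in> {i. i < n \<and> etahat m S (Z i) \<le> t + uu + dd}" using i by auto
            qed
            also have "\<dots> = length (filter (\<lambda>y. y \<le> t + uu + dd) xs)"
              unfolding xs_def by (rule len_filter_map_upt[symmetric])
            finally show ?thesis unfolding th_def by (intro kth_le k1)
          qed
          have th_lo: "t - uu - dd \<le> th"
          proof -
            have "length (filter (\<lambda>y. y < t - uu - dd) xs) = card {i. i < n \<and> etahat m S (Z i) < t - uu - dd}"
              unfolding xs_def by (rule len_filter_map_upt)
            also have "\<dots> \<le> card {i. i < n \<and> Z i \<in> A2}"
            proof (rule card_mono[OF fin1], rule subsetI)
              fix i assume "i \<in> {i. i < n \<and> etahat m S (Z i) < t - uu - dd}"
              hence i: "i < n" "etahat m S (Z i) < t - uu - dd" by auto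
              have "\<bar>etahat m S (Z i) - eta (Z i)\<bar> < dd" using close Zin i(1) by blast
              thus "i \<in> {i. i < n \<and> Z i \<in> A2}" using i by (auto simp: A2_def)
            qed
            finally have "real (length (filter (\<lambda>y. y < t - uu - dd) xs)) \<le> real (card {i. i < n \<and> Z i \<in> A2})"
              by simp
            also have "\<dots> < real k" using cnt2 sum_indicator_card by metis
            finally have "length (filter (\<lambda>y. y < t - uu - dd) xs) < k" by simp
            moreover have "k \<le> length xs" using kn by (simp add: xs_def)
            ultimately show ?thesis unfolding th_def by (intro kth_ge k1)
          qed
          define h where "h = uu + dd"
          have h2: "2 * h \<le> \<delta>0" "0 \<le> 2 * h" using uule ddle uupos ddpos by (auto simp: h_def)
          have sub: "symdiff {x. th \<le> etahat m S x} {x. t \<le> eta x}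
              \<subseteq> (UNIV - \<X>) \<union> ({x. eta x \<le> t + 2*h} - {x. eta x \<le> t - 2*h})"
          proof
            fix x assume x: "x \<in> symdiff {x. th \<le> etahat m S x} {x. t \<le> eta x}"
            show "x \<in> (UNIV - \<X>) \<union> ({x. eta x \<le> t + 2*h} - {x. eta x \<le> t - 2*h})"
            proof (cases "x \<in> \<X>")
              case True
              have "\<bar>etahat m S x - eta x\<bar> < dd" using close True by blast
              thus ?thesis using x th_up th_lo uupos ddpos unfolding symdiff_def h_def by auto
            qed simp
          qed
          have sdsets: "symdiff {x. th \<le> etahat m S x} {x. t \<le> eta x} \<in> sets QX"
          proof -
            have em[measurable]: "etahat m S \<in> borel_measurable QX"
              by (subst measurable_cong_sets[OF setsQX refl]) (rule etahat_meas[rule_format])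
            have "{x. th \<le> etahat m S x} \<in> sets QX" by (rule Qset) measurable
            moreover have "{x. t \<le> eta x} \<in> sets QX" by (rule Qset) measurable
            ultimately show ?thesis unfolding symdiff_def by auto
          qed
          have "measure QX (symdiff {x. th \<le> etahat m S x} {x. t \<le> eta x})
                \<le> measure QX ((UNIV - \<X>) \<union> ({x. eta x \<le> t + 2*h} - {x. eta x \<le> t - 2*h}))"
            using sub by (intro QXp.finite_measure_mono) auto
          also have "\<dots> \<le> measure QX (UNIV - \<X>) + measure QX ({x. eta x \<le> t + 2*h} - {x. eta x \<le> t - 2*h})"
            by (intro measure_Un_le) auto
          also have "\<dots> = F (t + 2*h) - F (t - 2*h)" using QX_X h2 by (simp add: Fdiff)
          also have "\<dots> \<le> b2 * (2*h) powr \<kappa> + b2 * (2*h) powr \<kappa>"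
            using Bup[of "2*h"] Bdn[of "2*h"] h2 by linarith
          also have "\<dots> \<le> 2 * b2 * 4 powr \<kappa> * (uu powr \<kappa> + dd powr \<kappa>)"
          proof -
            have "(2*h) powr \<kappa> \<le> (4 * max uu dd) powr \<kappa>"
              using h2 uupos ddpos B by (intro powr_mono2) (auto simp: h_def)
            also have "\<dots> = 4 powr \<kappa> * max uu dd powr \<kappa>" using uupos ddpos by (simp add: powr_mult)
            also have "max uu dd powr \<kappa> \<le> uu powr \<kappa> + dd powr \<kappa>"
              by (cases "uu \<le> dd") (auto simp: max_def)
            finally have "(2*h) powr \<kappa> \<le> 4 powr \<kappa> * (uu powr \<kappa> + dd powr \<kappa>)" by simp
            hence mle: "b2 * (2*h) powr \<kappa> \<le> b2 * (4 powr \<kappa> * (uu powr \<kappa> + dd powr \<kappa>))"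
              using B by (intro mult_left_mono) auto
            have e1: "2 * b2 * 4 powr \<kappa> * (uu powr \<kappa> + dd powr \<kappa>) = 2 * (b2 * (4 powr \<kappa> * (uu powr \<kappa> + dd powr \<kappa>)))"
              by (simp add: algebra_simps)
            show ?thesis using mle e1 by linarith
          qed
          also have "\<dots> \<le> c * (dd powr \<kappa> + sqrt (ln (real n) / real n))"
          proof -
            define sl where "sl = sqrt (ln (real n) / real n)"
            have ln1: "1 \<le> ln (real n)"
            proof -
              have "exp 1 \<le> real n" using exp_le n3 by linarith
              hence "ln (exp 1) \<le> ln (real n)" using npos by (subst ln_le_cancel_iff) auto
              thus ?thesis by simp
            qed
            have sl0: "sl \<ge> 0" using ln1 npos by (simp add: sl_def)
            have ssl: "ss = sqrt R * sl"
              by (simp add: ss_def s2_def sl_def real_sqrt_mult[symmetric])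
            have inv: "1 / real n \<le> sl"
            proof -
              have a: "(1 / real n)^2 \<le> 1 / real n" using n3 by (simp add: power2_eq_square field_simps)
              have b: "1 / real n \<le> ln (real n) / real n" using ln1 npos by (simp add: divide_right_mono)
              show ?thesis unfolding sl_def by (rule real_le_rsqrt) (use a b in linarith)
            qed
            have "ww \<le> (sqrt R + 1) * sl" using ssl inv ww_eq by (simp add: algebra_simps)
            hence "uu powr \<kappa> \<le> (sqrt R + 1) / b1 * sl" using uuk B by (simp add: field_simps)
            hence uC: "uu powr \<kappa> \<le> (sqrt R + 1) / b1 * sl" .
            have C0: "(sqrt R + 1) / b1 \<ge> 0" using B(2) Rpos by (intro divide_nonneg_pos) auto
            have D0: "dd powr \<kappa> \<ge> 0" by simp
            have CD: "(sqrt R + 1) / b1 * dd powr \<kappa> \<ge> 0" using C0 D0 by (rule mult_nonneg_nonneg)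
            have expand: "(1 + C') * (dd powr \<kappa> + sl) = dd powr \<kappa> + sl + C' * dd powr \<kappa> + C' * sl" for C' :: real
              by (simp add: algebra_simps)
            have "uu powr \<kappa> + dd powr \<kappa> \<le> (1 + (sqrt R + 1) / b1) * (dd powr \<kappa> + sl)"
              using uC CD expand[of "(sqrt R + 1) / b1"] sl0 by linarith
            hence "2 * b2 * 4 powr \<kappa> * (uu powr \<kappa> + dd powr \<kappa>) \<le> 2 * b2 * 4 powr \<kappa> * ((1 + (sqrt R + 1) / b1) * (dd powr \<kappa> + sl))"
              using B by (intro mult_left_mono) auto
            thus ?thesis by (simp add: c_def sl_def mult_ac)
          qed
          finally have bound: "measure QX (symdiff {x. th \<le> etahat m S x} {x. t \<le> eta x}) \<le> c * (\<delta> m powr \<kappa> + sqrt (ln (real n) / real n))"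
            by (simp add: dd_def)
          have "(S, Z) \<in> space (?PS \<Otimes>\<^sub>M ?PZ)" using Sspace Zspace by (simp add: space_pair_measure)
          thus "p \<in> {(S, Z) \<in> space (?PS \<Otimes>\<^sub>M ?PZ).
               measure QX
                 (symdiff
                   {x. etahat m S x \<ge> kth_smallest (nat \<lfloor>real n * (1 - \<alpha>)\<rfloor>)
                                          (map (\<lambda>i. etahat m S (Z i)) [0..<n])}
                   {x. eta x \<ge> t})
               \<le> c * (\<delta> m powr \<kappa> + sqrt (ln (real n) / real n))}"
            using bound by (simp add: pSZ th_def xs_def k_def)
        qed
        show "1 - \<tau> m - real n powr (- r) \<le> measure (?PS \<Otimes>\<^sub>M ?PZ) (Sgood \<times> Zgood)"
        proof -
          have PSps: "prob_space ?PS" by (rule prob_space_PiM) (use P_prob(1) in auto)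
          have PZps: "prob_space ?PZ" by (rule prob_space_PiM) (use QXps in auto)
          interpret PSp: prob_space ?PS by (rule PSps)
          interpret PZp: prob_space ?PZ by (rule PZps)
          interpret PP: pair_prob_space ?PS ?PZ
            by (simp add: pair_prob_space_def pair_sigma_finite_def PSps PZps prob_space_imp_sigma_finite)
          have mS: "measure ?PS Sgood \<ge> 1 - \<tau> m"
            using PSp.prob_compl[OF Eacc(1)] Eacc(3) by (simp add: Sgood_def)
          define p where "p = real n powr (-2*R)"
          have p0: "p \<ge> 0" by (simp add: p_def)
          have lnR: "exp (-2 * (real n * ss)\<^sup>2 / real n) = p"
          proof -
            have "ss\<^sup>2 = R * ln (real n) / real n"
              using Rpos n3 npos by (simp add: ss_def s2_def)
            hence "-2 * (real n * ss)\<^sup>2 / real n = ln (real n) * (-2 * R)"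
              using npos by (simp add: power_mult_distrib field_simps power2_eq_square)
            thus ?thesis using npos by (simp add: p_def powr_def)
          qed
          define B1 where "B1 = {Z \<in> space ?PZ. (\<Sum>i<n. indicator A1 (Z i)) \<le> real n * measure QX A1 - real n * ss}"
          define B2 where "B2 = {Z \<in> space ?PZ. (\<Sum>i<n. indicator A2 (Z i)) \<ge> real n * measure QX A2 + real n * ss}"
          define Nout where "Nout = {Z \<in> space ?PZ. \<not> (\<forall>i\<in>{..<n}. Z i \<in> \<X>)}"
          have nss0: "real n * ss \<ge> 0" using ss0 npos by simp
          have pB1: "measure ?PZ B1 \<le> p"
            using coord_hoeffding(1)[OF QXps A1s _ nss0, of n] n3 lnR by (simp add: B1_def)
          have pB2: "measure ?PZ B2 \<le> p"
            using coord_hoeffding(2)[OF QXps A2s _ nss0, of n] n3 lnR by (simp add: B2_def)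
          have B1s: "B1 \<in> sets ?PZ" unfolding B1_def by measurable
          have B2s: "B2 \<in> sets ?PZ" unfolding B2_def by measurable
          have Ns: "Nout \<in> sets ?PZ" unfolding Nout_def by measurable
          have pN: "measure ?PZ Nout = 0"
          proof -
            have nullX: "UNIV - \<X> \<in> null_sets QX"
              using QX_X cX_sets by (simp add: QXp.emeasure_eq_measure null_setsI)
            have aeX: "AE x in QX. x \<in> \<X>"
              by (rule AE_I'[OF nullX]) auto
            have ae: "AE Z in ?PZ. \<forall>i\<in>{..<n}. Z i \<in> \<X>"
              by (intro eventually_ball_finite ballI AE_PiM_component QXps aeX) auto
            have "emeasure ?PZ Nout = 0"
              using AE_iff_measurable[OF Ns Nout_def[symmetric]] ae by simp
            thus ?thesis by (simp add: measure_def)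
          qed
          have cover: "space ?PZ - Zgood \<subseteq> Nout \<union> B1 \<union> B2"
          proof
            fix Z assume Z: "Z \<in> space ?PZ - Zgood"
            show "Z \<in> Nout \<union> B1 \<union> B2"
            proof (cases "\<forall>i\<in>{..<n}. Z i \<in> \<X>")
              case False thus ?thesis using Z by (simp add: Nout_def)
            next
              case True
              hence "\<not> real k \<le> (\<Sum>i<n. indicator A1 (Z i)) \<or> \<not> (\<Sum>i<n. indicator A2 (Z i)) < real k"
                using Z by (auto simp: Zgood_def)
              thus ?thesis
              proof
                assume a: "\<not> real k \<le> (\<Sum>i<n. indicator A1 (Z i))"
                have "real n * (1 - \<alpha> + ww) \<le> real n * measure QX A1"
                  using FA1 npos by (intro mult_left_mono) auto
                hence "(\<Sum>i<n. indicator A1 (Z i)) \<le> real n * measure QX A1 - real n * ss"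
                  using a kle nww by (simp add: algebra_simps)
                thus ?thesis using Z by (simp add: B1_def)
              next
                assume a: "\<not> (\<Sum>i<n. indicator A2 (Z i)) < real k"
                have "real n * measure QX A2 \<le> real n * (1 - \<alpha> - ww)"
                  using FA2 npos by (intro mult_left_mono) auto
                hence "(\<Sum>i<n. indicator A2 (Z i)) \<ge> real n * measure QX A2 + real n * ss"
                  using a kgt nww by (simp add: algebra_simps)
                thus ?thesis using Z by (simp add: B2_def)
              qed
            qed
          qed
          have "measure ?PZ (space ?PZ - Zgood) \<le> measure ?PZ (Nout \<union> B1 \<union> B2)"
            using cover Ns B1s B2s by (intro PZp.finite_measure_mono) auto
          also have "\<dots> \<le> measure ?PZ (Nout \<union> B1) + measure ?PZ B2"
            using Ns B1s B2s by (intro measure_Un_le) auto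
          also have "\<dots> \<le> measure ?PZ Nout + measure ?PZ B1 + measure ?PZ B2"
            using Ns B1s B2s measure_Un_le[of Nout ?PZ B1] by simp
          also have "\<dots> \<le> 2 * p" using pN pB1 pB2 by simp
          finally have mZc: "measure ?PZ (space ?PZ - Zgood) \<le> 2 * p" .
          have mZ: "measure ?PZ Zgood \<ge> 1 - 2 * p"
            using PZp.prob_compl[OF Zsets] mZc by linarith
          have small: "2 * p \<le> real n powr (- r)"
          proof -
            have "real n powr (r + 2) \<ge> real n powr 1"
              using n3 r by (intro powr_mono) auto
            hence big: "real n powr (r + 2) \<ge> 3" using n3 by simp
            have "p = real n powr (- r) * real n powr (-(r+2))"
              by (simp add: p_def R_def powr_add[symmetric])
            also have "real n powr (-(r+2)) = 1 / real n powr (r + 2)"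
              by (subst powr_minus) (simp add: divide_inverse)
            finally have "p = real n powr (- r) / real n powr (r + 2)" by simp
            moreover have X0: "real n powr (-r) \<ge> 0" by simp
            moreover have "real n powr (-r) / real n powr (r+2) \<le> real n powr (-r) / 3"
              using big X0 n3 by (intro divide_left_mono) auto
            ultimately show ?thesis by linarith
          qed
          have prod: "measure (?PS \<Otimes>\<^sub>M ?PZ) (Sgood \<times> Zgood) = measure ?PS Sgood * measure ?PZ Zgood"
          proof -
            have "emeasure (?PS \<Otimes>\<^sub>M ?PZ) (Sgood \<times> Zgood) = emeasure ?PS Sgood * emeasure ?PZ Zgood"
              using Ssets Zsets by (rule PZp.emeasure_pair_measure_Times)
            thus ?thesis
              by (simp add: measure_def enn2real_mult)
          qed
          have a0: "measure ?PS Sgood \<ge> 0" "measure ?PS Sgood \<le> 1" by auto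
          have b1': "measure ?PZ Zgood \<le> 1" by auto
          have "real n powr r \<ge> 1" using n3 r by (intro ge_one_powr_ge_zero) auto
          hence "real n powr (-r) \<le> 1" by (subst powr_minus) (simp add: inverse_le_1_iff)
          hence p2: "1 - 2 * p \<ge> 0" using small by linarith
          have "(1 - \<tau> m) * (1 - 2*p) \<le> measure ?PS Sgood * (1 - 2*p)"
            using mS p2 by (intro mult_right_mono) auto
          also have "\<dots> \<le> measure ?PS Sgood * measure ?PZ Zgood"
            using mZ a0 by (intro mult_left_mono) auto
          finally have "(1 - \<tau> m) * (1 - 2*p) \<le> measure ?PS Sgood * measure ?PZ Zgood" .
          moreover have "1 - \<tau> m - 2 * p \<le> (1 - \<tau> m) * (1 - 2*p)"
          proof -
            have "0 \<le> p * \<tau> m" using tau_seq(1) p0 by (simp add: less_imp_le)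
            thus ?thesis by (simp add: algebra_simps)
          qed
          ultimately show ?thesis using prod small by linarith
        qed
      qed
    qed
  qed
qed

end
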